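(* There is a constant $C>0$ depending only on $\lambda$ such that $$|S_n(x)-T_n(x)|\le C\,a_n\qquad\text{for all } n=0,1,2,\dots\text{ and all }x\in K.$$
   Context: Fix $(\lambda_n)_{n\ge1}$ and $\lambda$ with $\frac14\le\lambda_n\le\lambda<\frac12$. Starting from $Q_0=[0,1]^2\subset\mathbb{C}$, inductively replace each square of generation $n-1$ by its $4$ axis-parallel corner subsquares of side ratio $\lambda_n$; generation $n$ consists of $4^n$ closed squares of side $s_n=\lambda_1\cdots\lambda_n$ ($s_0=1$), forming the family $\mathcal D_n$. $K=\bigcap_n\bigcup_{Q\in\mathcal D_n}Q$, $\mu$ is the Borel probability measure on $K$ giving mass $4^{-n}$ to each $Q\in\mathcal D_n$, and $a_n=1/(4^ns_n)$. Let $C(z)=1/z$. For $x\in K$ let $Q_n(x)$ be the square of $\mathcal D_n$ containing $x$, $T_n(x)=\int_{K\setminus Q_n(x)}C(x-y)\,d\mu(y)$, and $S_n(x)=\frac{1}{\mu(Q_n(x))}\int_{Q_n(x)}T_n\,d\mu$. *)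

theory Defs
  imports "HOL-Probability.Probability"
begin

text \<open>Ratios lam k are indexed from k = 1; lam 0 is irrelevant.\<close>

definition side :: "(nat \<Rightarrow> real) \<Rightarrow> nat \<Rightarrow> real" where
  "side lam n = (\<Prod>k\<in>{1..n}. lam k)"

text \<open>Lower-left corners of the generation-n squares: each square of generation n
  with corner c and side s_n is replaced by the 4 corner subsquares of side s_(n+1),
  whose lower-left corners are c + (s_n - s_(n+1)) d, d in {0,1,i,1+i}.\<close>

primrec corners :: "(nat \<Rightarrow> real) \<Rightarrow> nat \<Rightarrow> complex set" where
  "corners lam 0 = {0}"
| "corners lam (Suc n) =
     {c + complex_of_real ((1 - lam (Suc n)) * side lam n) * d | c d.
        c \<in> corners lam n \<and> d \<in> {0, 1, \<i>, 1 + \<i>}}"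

definition square :: "complex \<Rightarrow> real \<Rightarrow> complex set" where
  "square c r = cbox c (c + complex_of_real r * (1 + \<i>))"

definition gen :: "(nat \<Rightarrow> real) \<Rightarrow> nat \<Rightarrow> complex set set" where
  "gen lam n = (\<lambda>c. square c (side lam n)) ` corners lam n"

definition cantorK :: "(nat \<Rightarrow> real) \<Rightarrow> complex set" where
  "cantorK lam = (\<Inter>n. \<Union>(gen lam n))"

definition a_seq :: "(nat \<Rightarrow> real) \<Rightarrow> nat \<Rightarrow> real" where
  "a_seq lam n = 1 / (4 ^ n * side lam n)"

definition Qsq :: "(nat \<Rightarrow> real) \<Rightarrow> nat \<Rightarrow> complex \<Rightarrow> complex set" where
  "Qsq lam n x = (THE Q. Q \<in> gen lam n \<and> x \<in> Q)"

definition Tn :: "(nat \<Rightarrow> real) \<Rightarrow> complex measure \<Rightarrow> nat \<Rightarrow> complex \<Rightarrow> complex" where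
  "Tn lam \<mu> n x = set_lebesgue_integral \<mu> (cantorK lam - Qsq lam n x) (\<lambda>y. 1 / (x - y))"

definition Sn :: "(nat \<Rightarrow> real) \<Rightarrow> complex measure \<Rightarrow> nat \<Rightarrow> complex \<Rightarrow> complex" where
  "Sn lam \<mu> n x = (1 / measure \<mu> (Qsq lam n x)) *\<^sub>R
      set_lebesgue_integral \<mu> (Qsq lam n x) (Tn lam \<mu> n)"

end

theory Submission
  imports Defs
begin


lemma side_Suc: "side lam (Suc n) = side lam n * lam (Suc n)"
  unfolding side_def by (simp add: prod.nat_ivl_Suc' mult.commute)

lemma side_0[simp]: "side lam 0 = 1"
  unfolding side_def by simp

lemma side_pos: assumes "\<forall>k\<ge>1. 1/4 \<le> lam k" shows "side lam n > 0"
  unfolding side_def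
proof (intro prod_pos)
  fix a assume "a \<in> {1..n}"
  then have "1/4 \<le> lam a" using assms by auto
  then show "0 < lam a" by linarith
qed

lemma side_le:
  assumes "\<forall>k\<ge>1. 1/4 \<le> lam k \<and> lam k \<le> l" "j \<le> n"
  shows "side lam n \<le> l ^ (n - j) * side lam j"
  using assms(2)
proof (induction n)
  case 0 then show ?case by simp
next
  case (Suc n)
  show ?case
  proof (cases "j = Suc n")
    case True then show ?thesis by simp
  next
    case False
    then have jn: "j \<le> n" using Suc by simp
    have sp: "side lam n > 0" using side_pos assms(1) by auto
    have lS: "1/4 \<le> lam (Suc n) \<and> lam (Suc n) \<le> l" using assms(1) by simp
    have sj: "side lam j > 0" using side_pos assms(1) by auto
    have "side lam (Suc n) = side lam n * lam (Suc n)" by (rule side_Suc)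
    also have "\<dots> \<le> (l ^ (n - j) * side lam j) * l"
      using Suc.IH[OF jn] lS sp sj
      by (intro mult_mono) auto
    also have "\<dots> = l ^ (Suc n - j) * side lam j"
      using jn by (simp add: Suc_diff_le field_simps)
    finally show ?thesis .
  qed
qed

lemma finite_corners: "finite (corners lam n)"
proof (induction n)
  case 0 then show ?case by simp
next
  case (Suc n)
  have "corners lam (Suc n) = (\<lambda>(c,d). c + complex_of_real ((1 - lam (Suc n)) * side lam n) * d)
        ` (corners lam n \<times> {0, 1, \<i>, 1 + \<i>})" by auto
  then show ?case using Suc by simp
qed

lemma finite_gen: "finite (gen lam n)"
  unfolding gen_def using finite_corners by simp

lemma in_square: "z \<in> square c r \<longleftrightarrow> Re c \<le> Re z \<and> Re z \<le> Re c + r \<and> Im c \<le> Im z \<and> Im z \<le> Im c + r"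
  unfolding square_def in_cbox_complex_iff by auto

lemma closed_square: "closed (square c r)"
  unfolding square_def by (rule closed_cbox)

lemma closed_gen: "Q \<in> gen lam n \<Longrightarrow> closed Q"
  unfolding gen_def using closed_square by auto

lemma gen0: "gen lam 0 = {square 0 1}"
  unfolding gen_def by simp

lemma closed_K: "closed (cantorK lam)"
  unfolding cantorK_def
  by (intro closed_INT ballI closed_Union finite_gen) (auto intro: closed_gen)

lemma K_sub0: "cantorK lam \<subseteq> square 0 1"
  unfolding cantorK_def using gen0 by blast

lemma d_cases: "d \<in> {0, 1, \<i>, 1 + \<i>} \<Longrightarrow> (Re d = 0 \<or> Re d = 1) \<and> (Im d = 0 \<or> Im d = 1)"
  by auto

lemma Re_shift[simp]: "Re (c + complex_of_real t * d) = Re c + t * Re d"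
  and Im_shift[simp]: "Im (c + complex_of_real t * d) = Im c + t * Im d"
  by simp_all

lemma child_sub0:
  assumes "0 \<le> t" "t + r = s" "0 \<le> r" "d \<in> {0, 1, \<i>, 1 + \<i>}"
  shows "square (c + complex_of_real t * d) r \<subseteq> square c s"
  using d_cases[OF assms(4)] assms(1-3) by (auto simp: subset_iff in_square simp del: Re_shift Im_shift)

lemma child_sub:
  assumes "0 \<le> l" "l \<le> 1" "0 \<le> s" "d \<in> {0, 1, \<i>, 1 + \<i>}"
  shows "square (c + complex_of_real ((1 - l) * s) * d) (l * s) \<subseteq> square c s"
proof -
  have "l * s \<le> 1 * s" using assms by (intro mult_right_mono) auto
  then show ?thesis
    by (intro child_sub0) (use assms in \<open>auto simp: algebra_simps\<close>)
qed


definition sep :: "complex set \<Rightarrow> complex set \<Rightarrow> real \<Rightarrow> bool" where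
  "sep A B g \<longleftrightarrow> (\<forall>p\<in>A. \<forall>q\<in>B. g \<le> \<bar>Re p - Re q\<bar> \<or> g \<le> \<bar>Im p - Im q\<bar>)"

lemma sep_mono: "sep A B g \<Longrightarrow> A' \<subseteq> A \<Longrightarrow> B' \<subseteq> B \<Longrightarrow> g' \<le> g \<Longrightarrow> sep A' B' g'"
  unfolding sep_def by (meson order_trans subsetD)

lemma sep_dist: "sep A B g \<Longrightarrow> p \<in> A \<Longrightarrow> q \<in> B \<Longrightarrow> g \<le> cmod (p - q)"
  unfolding sep_def using abs_Re_le_cmod[of "p - q"] abs_Im_le_cmod[of "p - q"] by force

lemma gap1:
  fixes a t r x y e1 e2 :: real
  assumes "e1 = 0 \<or> e1 = 1" "e2 = 0 \<or> e2 = 1" "e1 \<noteq> e2"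
    "a + t * e1 \<le> x" "x \<le> a + t * e1 + r" "a + t * e2 \<le> y" "y \<le> a + t * e2 + r"
  shows "t - r \<le> \<bar>x - y\<bar>"
proof -
  have "(e1 = 0 \<and> e2 = 1) \<or> (e1 = 1 \<and> e2 = 0)" using assms(1-3) by auto
  then show ?thesis using assms(4-7) abs_ge_minus_self[of "x-y"] abs_ge_self[of "x-y"]
    by (elim disjE) auto
qed

lemma same_parent:
  assumes "d1 \<in> {0, 1, \<i>, 1 + \<i>}" "d2 \<in> {0, 1, \<i>, 1 + \<i>}" "d1 \<noteq> d2"
  shows "sep (square (a + complex_of_real t * d1) r) (square (a + complex_of_real t * d2) r) (t - r)"
  unfolding sep_def
proof (intro ballI)
  fix p q assume p: "p \<in> square (a + complex_of_real t * d1) r"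
    and q: "q \<in> square (a + complex_of_real t * d2) r"
  have "Re d1 \<noteq> Re d2 \<or> Im d1 \<noteq> Im d2" using assms(3) complex_eqI by blast
  then show "t - r \<le> \<bar>Re p - Re q\<bar> \<or> t - r \<le> \<bar>Im p - Im q\<bar>"
  proof
    assume "Re d1 \<noteq> Re d2"
    then have "t - r \<le> \<bar>Re p - Re q\<bar>"
      by (rule gap1[rotated 2]) (use p q d_cases[OF assms(1)] d_cases[OF assms(2)] in \<open>auto simp: in_square\<close>)
    then show ?thesis ..
  next
    assume "Im d1 \<noteq> Im d2"
    then have "t - r \<le> \<bar>Im p - Im q\<bar>"
      by (rule gap1[rotated 2]) (use p q d_cases[OF assms(1)] d_cases[OF assms(2)] in \<open>auto simp: in_square\<close>)
    then show ?thesis ..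
  qed
qed

lemma mem_corners_Suc: "c \<in> corners lam (Suc n) \<longleftrightarrow>
  (\<exists>a d. c = a + complex_of_real ((1 - lam (Suc n)) * side lam n) * d \<and> a \<in> corners lam n \<and> d \<in> {0, 1, \<i>, 1 + \<i>})"
  by (simp only: corners.simps mem_Collect_eq)

locale hyp =
  fixes lam :: "nat \<Rightarrow> real" and l0 :: real
  assumes H: "\<forall>k\<ge>1. 1/4 \<le> lam k \<and> lam k \<le> l0" and l0: "l0 < 1/2"
begin

lemma spos: "side lam n > 0" using side_pos H by auto

lemma lamb: "k \<ge> 1 \<Longrightarrow> 1/4 \<le> lam k \<and> lam k \<le> l0" using H by auto

lemma side_mono: "side lam (Suc n) \<le> side lam n"
proof -
  have "side lam n * lam (Suc n) \<le> side lam n * 1"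
    using lamb[of "Suc n"] l0 spos[of n] by (intro mult_left_mono) auto
  then show ?thesis by (simp add: side_Suc)
qed

lemma sep_step:
  assumes "a1 \<in> corners lam n" "a2 \<in> corners lam n" "d1 \<in> {0, 1, \<i>, 1 + \<i>}" "d2 \<in> {0, 1, \<i>, 1 + \<i>}"
    "c1 = a1 + complex_of_real ((1 - lam (Suc n)) * side lam n) * d1"
    "c2 = a2 + complex_of_real ((1 - lam (Suc n)) * side lam n) * d2"
    "c1 \<noteq> c2"
    "a1 \<noteq> a2 \<Longrightarrow> sep (square a1 (side lam n)) (square a2 (side lam n)) ((1 - 2 * l0) * side lam n)"
  shows "sep (square c1 (side lam (Suc n))) (square c2 (side lam (Suc n))) ((1 - 2 * l0) * side lam n)"
proof -
  define l where "l = lam (Suc n)"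
  define s where "s = side lam n"
  have l: "1/4 \<le> l" "l \<le> l0" using lamb[of "Suc n"] by (auto simp: l_def)
  have s: "s > 0" using spos by (simp add: s_def)
  have ss: "side lam (Suc n) = l * s" by (simp add: side_Suc l_def s_def)
  show ?thesis
  proof (cases "a1 = a2")
    case True
    then have "d1 \<noteq> d2" using assms(5-7) by auto
    from same_parent[OF assms(3,4) this, of a1 "(1 - l) * s" "l * s"]
    have "sep (square c1 (l * s)) (square c2 (l * s)) ((1 - l) * s - l * s)"
      using assms(5,6) True by (simp add: l_def s_def)
    moreover have "(1 - 2 * l0) * s \<le> (1 - l) * s - l * s"
      using l s by (simp add: algebra_simps mult_right_mono)
    ultimately show ?thesis unfolding ss s_def[symmetric] by (rule sep_mono[OF _ order_refl order_refl])
  next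
    case False
    have sub1: "square c1 (l * s) \<subseteq> square a1 s" unfolding assms(5) l_def[symmetric] s_def[symmetric]
      using l s l0 assms(3) by (intro child_sub) (auto simp: l_def s_def)
    have sub2: "square c2 (l * s) \<subseteq> square a2 s" unfolding assms(6) l_def[symmetric] s_def[symmetric]
      using l s l0 assms(4) by (intro child_sub) (auto simp: l_def s_def)
    have "sep (square a1 s) (square a2 s) ((1 - 2 * l0) * s)" using assms(8)[OF False] by (simp add: s_def)
    from this sub1 sub2 order_refl show ?thesis unfolding ss s_def[symmetric] by (rule sep_mono)
  qed
qed

lemma sep_corners:
  "c1 \<in> corners lam (Suc m) \<Longrightarrow> c2 \<in> corners lam (Suc m) \<Longrightarrow> c1 \<noteq> c2 \<Longrightarrow>
   sep (square c1 (side lam (Suc m))) (square c2 (side lam (Suc m))) ((1 - 2 * l0) * side lam m)"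
proof (induction m arbitrary: c1 c2)
  case 0
  then obtain a1 d1 a2 d2 where
    A: "c1 = a1 + complex_of_real ((1 - lam (Suc 0)) * side lam 0) * d1" "a1 \<in> corners lam 0" "d1 \<in> {0, 1, \<i>, 1 + \<i>}"
    "c2 = a2 + complex_of_real ((1 - lam (Suc 0)) * side lam 0) * d2" "a2 \<in> corners lam 0" "d2 \<in> {0, 1, \<i>, 1 + \<i>}"
    unfolding mem_corners_Suc by blast
  have "a1 = a2" using A by simp
  show ?case by (rule sep_step[OF A(2,5,3,6,1,4) 0(3)]) (use \<open>a1 = a2\<close> in simp)
next
  case (Suc m)
  then obtain a1 d1 a2 d2 where
    A: "c1 = a1 + complex_of_real ((1 - lam (Suc (Suc m))) * side lam (Suc m)) * d1" "a1 \<in> corners lam (Suc m)" "d1 \<in> {0, 1, \<i>, 1 + \<i>}"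
    "c2 = a2 + complex_of_real ((1 - lam (Suc (Suc m))) * side lam (Suc m)) * d2" "a2 \<in> corners lam (Suc m)" "d2 \<in> {0, 1, \<i>, 1 + \<i>}"
    unfolding mem_corners_Suc by blast
  have le: "(1 - 2 * l0) * side lam (Suc m) \<le> (1 - 2 * l0) * side lam m"
    using side_mono l0 by (intro mult_left_mono) auto
  show ?case
  proof (rule sep_step[OF A(2,5,3,6,1,4) Suc(4)])
    assume "a1 \<noteq> a2"
    from Suc.IH[OF A(2,5) this] le
    show "sep (square a1 (side lam (Suc m))) (square a2 (side lam (Suc m))) ((1 - 2 * l0) * side lam (Suc m))"
      by (rule sep_mono[OF _ order_refl order_refl])
  qed
qed


lemma g0: "1 - 2 * l0 > 0" using l0 by simp

lemma sep_gen:
  assumes "Q1 \<in> gen lam (Suc m)" "Q2 \<in> gen lam (Suc m)" "Q1 \<noteq> Q2"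
  shows "sep Q1 Q2 ((1 - 2 * l0) * side lam m)"
proof -
  obtain c1 where c1: "c1 \<in> corners lam (Suc m)" "Q1 = square c1 (side lam (Suc m))"
    using assms(1) unfolding gen_def by blast
  obtain c2 where c2: "c2 \<in> corners lam (Suc m)" "Q2 = square c2 (side lam (Suc m))"
    using assms(2) unfolding gen_def by blast
  have "c1 \<noteq> c2" using c1(2) c2(2) assms(3) by metis
  from sep_corners[OF c1(1) c2(1) this] show ?thesis unfolding c1(2) c2(2) .
qed

lemma gen_unique:
  assumes "Q1 \<in> gen lam n" "Q2 \<in> gen lam n" "x \<in> Q1" "x \<in> Q2"
  shows "Q1 = Q2"
proof (cases n)
  case 0 then show ?thesis using assms(1,2) gen0 by simp
next
  case (Suc m)
  show ?thesis
  proof (rule ccontr)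
    assume "Q1 \<noteq> Q2"
    then have "sep Q1 Q2 ((1 - 2 * l0) * side lam m)" using sep_gen[of Q1 m Q2] assms(1,2) Suc by simp
    from sep_dist[OF this assms(3,4)] have "(1 - 2 * l0) * side lam m \<le> 0" by simp
    moreover have "(1 - 2 * l0) * side lam m > 0" using g0 spos by simp
    ultimately show False by simp
  qed
qed

lemma Qsq_eq: assumes "Q \<in> gen lam n" "x \<in> Q" shows "Qsq lam n x = Q"
  unfolding Qsq_def
proof (rule the_equality)
  show "Q \<in> gen lam n \<and> x \<in> Q" using assms by simp
  fix Q' assume "Q' \<in> gen lam n \<and> x \<in> Q'"
  then show "Q' = Q" using gen_unique assms by blast
qed

lemma K_gen: "x \<in> cantorK lam \<Longrightarrow> \<exists>Q\<in>gen lam n. x \<in> Q"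
  unfolding cantorK_def by (simp add: Union_iff)

lemma Qsq_K: assumes "x \<in> cantorK lam" shows "Qsq lam n x \<in> gen lam n" "x \<in> Qsq lam n x"
proof -
  obtain Q where "Q \<in> gen lam n" "x \<in> Q" using K_gen[OF assms, of n] by blast
  then show "Qsq lam n x \<in> gen lam n" "x \<in> Qsq lam n x" using Qsq_eq[of Q n x] by simp_all
qed

lemma gen_parent: assumes "Q \<in> gen lam (Suc n)" shows "\<exists>P\<in>gen lam n. Q \<subseteq> P"
proof -
  obtain c where c: "c \<in> corners lam (Suc n)" "Q = square c (side lam (Suc n))"
    using assms unfolding gen_def by auto
  then obtain a d where ad: "c = a + complex_of_real ((1 - lam (Suc n)) * side lam n) * d"
    "a \<in> corners lam n" "d \<in> {0, 1, \<i>, 1 + \<i>}"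
    unfolding mem_corners_Suc by blast
  have ss: "side lam (Suc n) = lam (Suc n) * side lam n" by (simp add: side_Suc mult.commute)
  have "Q \<subseteq> square a (side lam n)"
    unfolding c(2) ad(1) ss
    using lamb[of "Suc n"] l0 spos[of n] ad(3) by (intro child_sub) auto
  moreover have "square a (side lam n) \<in> gen lam n" using ad(2) unfolding gen_def by auto
  ultimately show ?thesis by blast
qed

lemma gen_sub: "m \<le> n \<Longrightarrow> Q \<in> gen lam n \<Longrightarrow> \<exists>P\<in>gen lam m. Q \<subseteq> P"
proof (induction n arbitrary: Q)
  case 0 then have "m = 0" by simp
  then show ?case using 0(2) by blast
next
  case (Suc n)
  show ?case
  proof (cases "m = Suc n")
    case True then show ?thesis using Suc.prems(2) by blast
  next
    case False
    then have "m \<le> n" using Suc by simp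
    obtain P where P: "P \<in> gen lam n" "Q \<subseteq> P" using gen_parent[OF Suc.prems(2)] by blast
    obtain P' where "P' \<in> gen lam m" "P \<subseteq> P'" using Suc.IH[OF \<open>m \<le> n\<close> P(1)] by blast
    then show ?thesis using P(2) by blast
  qed
qed

lemma Qsq_nested: assumes "x \<in> cantorK lam" "m \<le> n" shows "Qsq lam n x \<subseteq> Qsq lam m x"
proof -
  obtain P where P: "P \<in> gen lam m" "Qsq lam n x \<subseteq> P" using gen_sub[OF assms(2) Qsq_K(1)[OF assms(1)]] by blast
  then have "x \<in> P" using Qsq_K(2)[OF assms(1)] by blast
  then have "Qsq lam m x = P" using Qsq_eq P by blast
  then show ?thesis using P by simp
qed

lemma Qsq_0: assumes "x \<in> cantorK lam" shows "Qsq lam 0 x = square 0 1"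
proof -
  have "Qsq lam 0 x \<in> gen lam 0" by (rule Qsq_K(1)[OF assms])
  then show ?thesis unfolding gen0 by simp
qed

lemma key_point:
  assumes x: "x \<in> cantorK lam" and z: "z \<in> Qsq lam n x" and z': "z' \<in> Qsq lam n x"
    and y: "y \<in> cantorK lam" "y \<notin> Qsq lam n x"
  shows "\<exists>j<n. y \<in> Qsq lam j x \<and> (1 - 2 * l0) * side lam j \<le> cmod (z - y) \<and> (1 - 2 * l0) * side lam j \<le> cmod (z' - y)"
proof -
  define S where "S = {m. 1 \<le> m \<and> m \<le> n \<and> y \<notin> Qsq lam m x}"
  have yK: "y \<in> square 0 1" using y(1) K_sub0 by blast
  have n1: "n \<ge> 1"
  proof (rule ccontr)
    assume "\<not> n \<ge> 1" then have "n = 0" by simp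
    then have "Qsq lam n x = square 0 1" using Qsq_0[OF x] by simp
    then show False using y(2) yK by simp
  qed
  then have "n \<in> S" using y(2) unfolding S_def by simp
  define m where "m = (LEAST m. m \<in> S)"
  have mS: "m \<in> S" unfolding m_def by (rule LeastI) fact
  then have m1: "1 \<le> m" "m \<le> n" "y \<notin> Qsq lam m x" unfolding S_def by auto
  define j where "j = m - 1"
  have mj: "m = Suc j" using m1(1) unfolding j_def by simp
  have yj: "y \<in> Qsq lam j x"
  proof (cases "j = 0")
    case True
    then have "Qsq lam j x = square 0 1" using Qsq_0[OF x] by simp
    then show ?thesis using yK by simp
  next
    case False
    have "j < (LEAST m. m \<in> S)" using mj by (simp add: m_def[symmetric])
    then have "j \<notin> S" by (rule not_less_Least)
    moreover have "1 \<le> j" "j \<le> n" using False m1(2) mj by simp_all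
    ultimately show ?thesis unfolding S_def by blast
  qed
  have yy: "y \<in> Qsq lam m y" by (rule Qsq_K(2)[OF y(1)])
  have neq: "Qsq lam m x \<noteq> Qsq lam m y" using yy m1(3) by metis
  have g1: "Qsq lam (Suc j) x \<in> gen lam (Suc j)" by (rule Qsq_K(1)[OF x])
  have g2: "Qsq lam (Suc j) y \<in> gen lam (Suc j)" by (rule Qsq_K(1)[OF y(1)])
  have sp: "sep (Qsq lam m x) (Qsq lam m y) ((1 - 2 * l0) * side lam j)"
    using sep_gen[OF g1 g2] neq unfolding mj by blast
  have zm: "z \<in> Qsq lam m x" using Qsq_nested[OF x m1(2)] z by blast
  have zm': "z' \<in> Qsq lam m x" using Qsq_nested[OF x m1(2)] z' by blast
  have "(1 - 2 * l0) * side lam j \<le> cmod (z - y) \<and> (1 - 2 * l0) * side lam j \<le> cmod (z' - y)"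
    using sep_dist[OF sp zm yy] sep_dist[OF sp zm' yy] by blast
  moreover have "j < n" using mj m1(2) by simp
  ultimately show ?thesis using yj by blast
qed

end



context hyp begin

definition Lsum :: "nat \<Rightarrow> real" where
  "Lsum n = (\<Sum>j<n. (1/4)^j / ((1 - 2 * l0) * side lam j)^2)"

lemma Lsum_nonneg: "0 \<le> Lsum n"
  unfolding Lsum_def by (intro sum_nonneg) auto

lemma term_bound:
  assumes "j < n"
  shows "4^n * (side lam n)^2 * ((1/4)^j / ((1 - 2 * l0) * side lam j)^2)
         \<le> (4 * l0^2)^(n - j) / (1 - 2 * l0)^2"
proof -
  define k where "k = n - j"
  have nk: "n = j + k" using assms unfolding k_def by simp
  define g where "g = 1 - 2 * l0"
  have gp: "g > 0" using g0 unfolding g_def by simp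
  have sj: "side lam j > 0" using spos by simp
  have sn: "side lam n > 0" using spos by simp
  have l0p: "l0 \<ge> 1/4" using lamb[of 1] by simp
  have le: "side lam n \<le> l0^k * side lam j" using side_le[OF H] assms unfolding k_def by simp
  have le2: "(side lam n)^2 \<le> (l0^k * side lam j)^2" using le sn by (intro power_mono) auto
  have "4^n * (side lam n)^2 * ((1/4)^j / (g * side lam j)^2) = 4^k * (side lam n)^2 / (g^2 * (side lam j)^2)"
    unfolding nk by (simp add: power_add field_simps power_mult_distrib)
  also have "\<dots> \<le> 4^k * (l0^k * side lam j)^2 / (g^2 * (side lam j)^2)"
    using le2 gp sj by (intro divide_right_mono mult_left_mono) auto
  also have "\<dots> = (4 * l0^2)^k / g^2"
    using sj by (simp add: field_simps power_mult_distrib power_mult[symmetric] mult.commute)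
  finally show ?thesis unfolding g_def k_def .
qed

lemma geo_bound:
  fixes r :: real assumes "0 \<le> r" "r < 1"
  shows "(\<Sum>j<n. r^(n - j)) \<le> 1 / (1 - r)"
proof -
  have "(\<Sum>j<n. r^(n - j)) = (\<Sum>j<n. r * r^(n - Suc j))"
    by (intro sum.cong refl) (metis Suc_diff_Suc lessThan_iff power_Suc)
  also have "\<dots> = r * (\<Sum>j<n. r^(n - Suc j))" by (simp add: sum_distrib_left)
  also have "(\<Sum>j<n. r^(n - Suc j)) = (\<Sum>k<n. r^k)"
    by (rule sum.nat_diff_reindex)
  also have "(\<Sum>k<n. r^k) = (1 - r^n) / (1 - r)"
    using assms by (simp add: sum_gp_strict)
  also have "r * ((1 - r^n) / (1 - r)) \<le> 1 / (1 - r)"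
  proof -
    have "r * (1 - r^n) \<le> 1" using assms
      by (smt (verit) mult_left_le_one_le zero_le_power power_le_one)
    then show ?thesis using assms by (simp add: divide_right_mono)
  qed
  finally show ?thesis .
qed

definition Cc :: real where "Cc = 2 / ((1 - 2 * l0)^2 * (1 - 4 * l0^2))"

lemma Cc_pos: "Cc > 0"
proof -
  have "4 * l0^2 < 1"
  proof -
    have "l0 \<ge> 1/4" using lamb[of 1] by simp
    then have "l0^2 < (1/2)^2" using l0 by (intro power_strict_mono) auto
    moreover have "(1/2::real)^2 = 1/4" by (simp add: power2_eq_square)
    ultimately show ?thesis by linarith
  qed
  then show ?thesis unfolding Cc_def using g0 by simp
qed

lemma arith_bound: "2 * side lam n * Lsum n \<le> Cc * a_seq lam n"
proof -
  define r where "r = 4 * l0^2"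
  define g where "g = 1 - 2 * l0"
  have gp: "g > 0" using g0 unfolding g_def by simp
  have r: "0 \<le> r" "r < 1"
  proof -
    have "l0 \<ge> 1/4" using lamb[of 1] by simp
    then have "l0^2 < (1/2)^2" using l0 by (intro power_strict_mono) auto
    moreover have "(1/2::real)^2 = 1/4" by (simp add: power2_eq_square)
    ultimately show "r < 1" unfolding r_def by linarith
  qed (simp add: r_def)
  have sn: "side lam n > 0" using spos by simp
  have "4^n * (side lam n)^2 * Lsum n = (\<Sum>j<n. 4^n * (side lam n)^2 * ((1/4)^j / ((1 - 2 * l0) * side lam j)^2))"
    unfolding Lsum_def by (simp add: sum_distrib_left)
  also have "\<dots> \<le> (\<Sum>j<n. r^(n - j) / g^2)"
    unfolding r_def g_def by (intro sum_mono term_bound) simp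
  also have "\<dots> = (\<Sum>j<n. r^(n - j)) / g^2" by (simp add: sum_divide_distrib)
  also have "\<dots> \<le> (1 / (1 - r)) / g^2"
    using geo_bound[OF r] gp by (intro divide_right_mono) auto
  finally have main: "4^n * (side lam n)^2 * Lsum n \<le> 1 / ((1 - r) * g^2)" by simp
  have "2 * side lam n * Lsum n = (2 / (4^n * side lam n)) * (4^n * (side lam n)^2 * Lsum n)"
    using sn by (simp add: field_simps power2_eq_square)
  also have "\<dots> \<le> (2 / (4^n * side lam n)) * (1 / ((1 - r) * g^2))"
    using main sn by (intro mult_left_mono) auto
  also have "\<dots> = Cc * a_seq lam n"
    unfolding Cc_def a_seq_def r_def g_def by (simp add: field_simps)
  finally show ?thesis .
qed

end


locale mhyp = hyp +
  fixes \<mu> :: "complex measure"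
  assumes sets_mu: "sets \<mu> = sets borel" and P: "prob_space \<mu>"
    and MK: "measure \<mu> (cantorK lam) = 1"
    and MQ: "\<forall>n. \<forall>Q\<in>gen lam n. measure \<mu> Q = 1 / 4 ^ n"
begin

interpretation prob_space \<mu> by (rule P)

lemma space_mu: "space \<mu> = UNIV"
  using sets_eq_imp_space_eq[OF sets_mu] by simp

lemma meas_mu: "borel_measurable \<mu> = borel_measurable borel"
  by (rule measurable_cong_sets[OF sets_mu refl])

lemma closed_sets: "closed A \<Longrightarrow> A \<in> sets \<mu>"
  using sets_mu by simp

lemma side_anti: "j \<le> n \<Longrightarrow> side lam n \<le> side lam j"
proof -
  assume jn: "j \<le> n"
  have l0p: "0 \<le> l0" "l0 \<le> 1" using lamb[of 1] l0 by auto
  have "side lam n \<le> l0^(n-j) * side lam j" using side_le[OF H jn] .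
  also have "\<dots> \<le> 1 * side lam j" using l0p spos[of j]
    by (intro mult_right_mono power_le_one) auto
  finally show ?thesis by simp
qed

lemma meas_f: "A \<in> sets borel \<Longrightarrow> (\<lambda>y. indicator A y *\<^sub>R (1 / (z - y))) \<in> borel_measurable \<mu>"
  unfolding meas_mu
  by (intro borel_measurable_scaleR borel_measurable_indicator borel_measurable_divide borel_measurable_diff
      borel_measurable_const measurable_ident_sets refl)

lemma T_eq: assumes "Q \<in> gen lam n" "z \<in> Q"
  shows "Tn lam \<mu> n z = (\<integral>y. indicator (cantorK lam - Q) y *\<^sub>R (1 / (z - y)) \<partial>\<mu>)"
  unfolding Tn_def set_lebesgue_integral_def Qsq_eq[OF assms] ..

lemma Q_sets: "Q \<in> gen lam n \<Longrightarrow> Q \<in> sets \<mu>"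
  using closed_sets closed_gen by blast

lemma KQ_sets: "Q \<in> gen lam n \<Longrightarrow> cantorK lam - Q \<in> sets \<mu>"
  using closed_sets[OF closed_K] Q_sets by blast

lemma KQ_borel: "Q \<in> gen lam n \<Longrightarrow> cantorK lam - Q \<in> sets borel"
  using KQ_sets sets_mu by simp

lemma pos_gs: "(1 - 2 * l0) * side lam n > 0"
  using g0 spos by simp

lemma integrable_f:
  assumes x: "x \<in> cantorK lam" and z: "z \<in> Qsq lam n x"
  shows "integrable \<mu> (\<lambda>y. indicator (cantorK lam - Qsq lam n x) y *\<^sub>R (1 / (z - y)))"
proof (rule integrable_const_bound[where B = "1 / ((1 - 2 * l0) * side lam n)"])
  have Qg: "Qsq lam n x \<in> gen lam n" by (rule Qsq_K(1)[OF x])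
  show "(\<lambda>y. indicator (cantorK lam - Qsq lam n x) y *\<^sub>R (1 / (z - y))) \<in> borel_measurable \<mu>"
    by (rule meas_f[OF KQ_borel[OF Qg]])
  show "AE y in \<mu>. norm (indicator (cantorK lam - Qsq lam n x) y *\<^sub>R (1 / (z - y))) \<le> 1 / ((1 - 2 * l0) * side lam n)"
  proof (rule AE_I2)
    fix y
    show "norm (indicator (cantorK lam - Qsq lam n x) y *\<^sub>R (1 / (z - y))) \<le> 1 / ((1 - 2 * l0) * side lam n)"
    proof (cases "y \<in> cantorK lam - Qsq lam n x")
      case False
      then show ?thesis using pos_gs[of n] by simp
    next
      case True
      then obtain j where j: "j < n" "(1 - 2 * l0) * side lam j \<le> cmod (z - y)"
        using key_point[OF x z z] by blast
      have "(1 - 2 * l0) * side lam n \<le> (1 - 2 * l0) * side lam j"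
        using side_anti[of j n] j(1) g0 by (intro mult_left_mono) auto
      then have d: "(1 - 2 * l0) * side lam n \<le> cmod (z - y)" using j(2) by linarith
      have "norm (indicator (cantorK lam - Qsq lam n x) y *\<^sub>R (1 / (z - y))) = 1 / cmod (z - y)"
        using True by (simp add: norm_divide)
      also have "\<dots> \<le> 1 / ((1 - 2 * l0) * side lam n)"
      proof -
        have cz: "0 < cmod (z - y)" using d pos_gs[of n] by linarith
        show ?thesis by (rule divide_left_mono[OF d]) (simp, rule mult_pos_pos[OF cz pos_gs])
      qed
      finally show ?thesis .
    qed
  qed
qed

lemma finite_meas: "emeasure \<mu> A < \<infinity>"
  by (simp add: less_top[symmetric])

lemma lip:
  assumes x: "x \<in> cantorK lam" and z: "z \<in> Qsq lam n x" and z': "z' \<in> Qsq lam n x"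
  shows "cmod (Tn lam \<mu> n z - Tn lam \<mu> n z') \<le> cmod (z - z') * Lsum n"
proof -
  define Q where "Q = Qsq lam n x"
  define K where "K = cantorK lam"
  define g where "g = 1 - 2 * l0"
  have Qg: "Q \<in> gen lam n" unfolding Q_def by (rule Qsq_K(1)[OF x])
  define f where "f = (\<lambda>w y. indicator (K - Q) y *\<^sub>R (1 / (w - y)))"
  define h where "h = (\<lambda>y. cmod (z - z') * (\<Sum>j<n. indicator (Qsq lam j x) y / (g * side lam j)^2))"
  have if1: "integrable \<mu> (f z)" unfolding f_def K_def Q_def by (rule integrable_f[OF x z])
  have if2: "integrable \<mu> (f z')" unfolding f_def K_def Q_def by (rule integrable_f[OF x z'])
  have Qj: "Qsq lam j x \<in> gen lam j" for j by (rule Qsq_K(1)[OF x])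
  have ih: "integrable \<mu> h" unfolding h_def
    using Q_sets[OF Qj] finite_meas by (intro integrable_mult_right integrable_sum integrable_divide integrable_real_indicator) auto
  have "Tn lam \<mu> n z - Tn lam \<mu> n z' = (\<integral>y. f z y - f z' y \<partial>\<mu>)"
    unfolding T_eq[OF Qg z[folded Q_def]] T_eq[OF Qg z'[folded Q_def]] f_def K_def
    using if1 if2 unfolding f_def K_def by simp
  also have "cmod \<dots> \<le> (\<integral>y. h y \<partial>\<mu>)"
  proof (rule Bochner_Integration.integral_norm_bound_integral)
    show "integrable \<mu> (\<lambda>y. f z y - f z' y)" using if1 if2 by simp
    show "integrable \<mu> h" by (rule ih)
    fix y
    have hnn: "0 \<le> h y" unfolding h_def by (intro mult_nonneg_nonneg sum_nonneg) auto
    show "norm (f z y - f z' y) \<le> h y"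
    proof (cases "y \<in> K - Q")
      case False
      then show ?thesis using hnn unfolding f_def by simp
    next
      case True
      then obtain j where j: "j < n" "y \<in> Qsq lam j x" "g * side lam j \<le> cmod (z - y)"
        "g * side lam j \<le> cmod (z' - y)"
        using key_point[OF x z z'] unfolding K_def Q_def g_def by blast
      have dp: "g * side lam j > 0" unfolding g_def by (rule pos_gs)
      have c1: "cmod (z - y) > 0" "cmod (z' - y) > 0" using dp j by linarith+
      have ne: "z - y \<noteq> 0" "z' - y \<noteq> 0" using c1 by auto
      have "f z y - f z' y = (z' - z) / ((z - y) * (z' - y))"
        using True ne unfolding f_def by (simp add: field_simps)
      then have "norm (f z y - f z' y) = cmod (z - z') / (cmod (z - y) * cmod (z' - y))"
        by (simp add: norm_divide norm_mult norm_minus_commute)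
      also have "\<dots> \<le> cmod (z - z') / ((g * side lam j) * (g * side lam j))"
      proof -
        have pp: "(g * side lam j) * (g * side lam j) \<le> cmod (z - y) * cmod (z' - y)"
          using j(3,4) dp by (intro mult_mono) auto
        show ?thesis by (rule divide_left_mono[OF pp]) (simp, intro mult_pos_pos c1 dp)
      qed
      also have "\<dots> = cmod (z - z') * (indicator (Qsq lam j x) y / (g * side lam j)^2)"
        using j(2) by (simp add: power2_eq_square)
      also have "\<dots> \<le> h y" unfolding h_def
        using j(1) by (intro mult_left_mono member_le_sum[where i = j]) auto
      finally show ?thesis .
    qed
  qed
  also have "(\<integral>y. h y \<partial>\<mu>) = cmod (z - z') * (\<Sum>j<n. measure \<mu> (Qsq lam j x) / (g * side lam j)^2)"
  proof -
    have "(\<integral>y. (\<Sum>j<n. indicator (Qsq lam j x) y / (g * side lam j)^2) \<partial>\<mu>)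
        = (\<Sum>j<n. (\<integral>y. indicator (Qsq lam j x) y / (g * side lam j)^2 \<partial>\<mu>))"
      using Q_sets[OF Qj] finite_meas by (intro Bochner_Integration.integral_sum integrable_divide integrable_real_indicator) auto
    then show ?thesis unfolding h_def by (simp add: Q_sets[OF Qj] finite_meas space_mu)
  qed
  also have "\<dots> = cmod (z - z') * Lsum n"
  proof -
    have mj: "measure \<mu> (Qsq lam j x) = 1 / 4^j" for j using MQ Qj by blast
    show ?thesis unfolding Lsum_def g_def by (simp add: mj power_one_over)
  qed
  finally show ?thesis .
qed

lemma diam:
  assumes "Q \<in> gen lam n" "z \<in> Q" "z' \<in> Q"
  shows "cmod (z - z') \<le> 2 * side lam n"
proof -
  obtain c where c: "Q = square c (side lam n)" using assms(1) unfolding gen_def by auto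
  have "\<bar>Re (z - z')\<bar> \<le> side lam n" "\<bar>Im (z - z')\<bar> \<le> side lam n"
    using assms(2,3) unfolding c in_square by auto
  then show ?thesis using cmod_le[of "z - z'"] by linarith
qed

lemma main_local:
  assumes x: "x \<in> cantorK lam"
  shows "cmod (Sn lam \<mu> n x - Tn lam \<mu> n x) \<le> Cc * a_seq lam n"
proof -
  define Q where "Q = Qsq lam n x"
  define F where "F = Tn lam \<mu> n"
  define B where "B = 2 * side lam n * Lsum n"
  have Qg: "Q \<in> gen lam n" unfolding Q_def by (rule Qsq_K(1)[OF x])
  have xQ: "x \<in> Q" unfolding Q_def by (rule Qsq_K(2)[OF x])
  have Bb: "B \<le> Cc * a_seq lam n" unfolding B_def by (rule arith_bound)
  have lipQ: "cmod (F z - F z') \<le> cmod (z - z') * Lsum n" if "z \<in> Q" "z' \<in> Q" for z z'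
    using lip[OF x, of z n z'] that unfolding Q_def F_def by simp
  have difB: "cmod (F z - F z') \<le> B" if "z \<in> Q" "z' \<in> Q" for z z'
  proof -
    have "cmod (F z - F z') \<le> cmod (z - z') * Lsum n" by (rule lipQ[OF that])
    also have "\<dots> \<le> (2 * side lam n) * Lsum n"
      using diam[OF Qg that] Lsum_nonneg by (intro mult_right_mono) auto
    finally show ?thesis unfolding B_def .
  qed
  have cont: "continuous_on Q F"
  proof (rule lipschitz_on_continuous_on)
    show "(Lsum n)-lipschitz_on Q F"
      unfolding lipschitz_on_def using lipQ Lsum_nonneg by (auto simp: dist_norm mult.commute)
  qed
  have Qb: "Q \<in> sets borel" using Q_sets[OF Qg] sets_mu by simp
  have meas: "(\<lambda>z. indicator Q z *\<^sub>R F z) \<in> borel_measurable \<mu>"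
    unfolding meas_mu by (rule borel_measurable_continuous_on_indicator[OF Qb cont])
  have intF: "integrable \<mu> (\<lambda>z. indicator Q z *\<^sub>R F z)"
  proof (rule integrable_const_bound[where B = "cmod (F x) + B"])
    show "AE z in \<mu>. norm (indicator Q z *\<^sub>R F z) \<le> cmod (F x) + B"
    proof (rule AE_I2)
      fix z
      have B0: "0 \<le> B" using difB[OF xQ xQ] by simp
      show "norm (indicator Q z *\<^sub>R F z) \<le> cmod (F x) + B"
      proof (cases "z \<in> Q")
        case True
        then have "cmod (F z - F x) \<le> B" using difB xQ by blast
        then show ?thesis using True norm_triangle_ineq2[of "F z" "F x"] by simp
      next
        case False then show ?thesis using B0 by simp
      qed
    qed
  qed (rule meas)
  have QQ: "Q \<in> sets \<mu>" by (rule Q_sets[OF Qg])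
  have mQ: "measure \<mu> Q = 1 / 4^n" using MQ Qg by blast
  have mQp: "measure \<mu> Q > 0" unfolding mQ by simp
  have intI: "integrable \<mu> (indicator Q :: complex \<Rightarrow> real)"
    using QQ finite_meas by (intro integrable_real_indicator) auto
  have intc: "integrable \<mu> (\<lambda>z. indicator Q z *\<^sub>R F x)"
    using intI by (intro integrable_scaleR_left)
  have c_int: "(\<integral>z. indicator Q z *\<^sub>R F x \<partial>\<mu>) = measure \<mu> Q *\<^sub>R F x"
    using intI QQ by (simp add: space_mu)
  have Sn_eq: "Sn lam \<mu> n x = (1 / measure \<mu> Q) *\<^sub>R (\<integral>z. indicator Q z *\<^sub>R F z \<partial>\<mu>)"
    unfolding Sn_def set_lebesgue_integral_def Q_def F_def ..
  have "Sn lam \<mu> n x - F x = (1 / measure \<mu> Q) *\<^sub>R ((\<integral>z. indicator Q z *\<^sub>R F z \<partial>\<mu>) - measure \<mu> Q *\<^sub>R F x)"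
    unfolding Sn_eq using mQp by (simp add: scaleR_diff_right)
  also have "(\<integral>z. indicator Q z *\<^sub>R F z \<partial>\<mu>) - measure \<mu> Q *\<^sub>R F x
      = (\<integral>z. indicator Q z *\<^sub>R (F z - F x) \<partial>\<mu>)"
    unfolding c_int[symmetric] scaleR_diff_right
    by (rule Bochner_Integration.integral_diff[symmetric, OF intF intc])
  finally have eq: "Sn lam \<mu> n x - F x = (1 / measure \<mu> Q) *\<^sub>R (\<integral>z. indicator Q z *\<^sub>R (F z - F x) \<partial>\<mu>)" .
  have "cmod (\<integral>z. indicator Q z *\<^sub>R (F z - F x) \<partial>\<mu>) \<le> (\<integral>z. indicator Q z * B \<partial>\<mu>)"
  proof (rule Bochner_Integration.integral_norm_bound_integral)
    show "integrable \<mu> (\<lambda>z. indicator Q z *\<^sub>R (F z - F x))"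
      using intF intc by (simp add: scaleR_diff_right)
    show "integrable \<mu> (\<lambda>z. indicator Q z * B)" using intI by simp
    fix z show "norm (indicator Q z *\<^sub>R (F z - F x)) \<le> indicator Q z * B"
      using difB[of z x] xQ by (cases "z \<in> Q") auto
  qed
  also have "\<dots> = measure \<mu> Q * B" using QQ by (simp add: space_mu)
  finally have nb: "cmod (\<integral>z. indicator Q z *\<^sub>R (F z - F x) \<partial>\<mu>) \<le> measure \<mu> Q * B" .
  have "cmod (Sn lam \<mu> n x - F x) = (1 / measure \<mu> Q) * cmod (\<integral>z. indicator Q z *\<^sub>R (F z - F x) \<partial>\<mu>)"
    unfolding eq using mQp by simp
  also have "\<dots> \<le> (1 / measure \<mu> Q) * (measure \<mu> Q * B)"
    using nb mQp by (intro mult_left_mono) auto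
  also have "\<dots> = B" using mQp by simp
  finally show ?thesis using Bb unfolding F_def by simp
qed

end


theorem mainTheorem6:
  fixes lambda :: real
  assumes "1/4 \<le> lambda" and "lambda < 1/2"
  shows "\<exists>C>0. \<forall>(lam :: nat \<Rightarrow> real) (\<mu> :: complex measure).
           (\<forall>n\<ge>1. 1/4 \<le> lam n \<and> lam n \<le> lambda) \<longrightarrow>
           sets \<mu> = sets borel \<longrightarrow> prob_space \<mu> \<longrightarrow>
           measure \<mu> (cantorK lam) = 1 \<longrightarrow>
           (\<forall>n. \<forall>Q\<in>gen lam n. measure \<mu> Q = 1 / 4 ^ n) \<longrightarrow>
           (\<forall>n. \<forall>x\<in>cantorK lam. norm (Sn lam \<mu> n x - Tn lam \<mu> n x) \<le> C * a_seq lam n)"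
proof (intro exI[of _ "2 / ((1 - 2 * lambda)^2 * (1 - 4 * lambda^2))"] conjI allI impI ballI)
  have "lambda^2 < (1/2)^2" using assms by (intro power_strict_mono) auto
  moreover have "(1/2::real)^2 = 1/4" by (simp add: power2_eq_square)
  ultimately have "4 * lambda^2 < 1" by linarith
  then show "0 < 2 / ((1 - 2 * lambda)^2 * (1 - 4 * lambda^2))" using assms by simp
next
  fix lam :: "nat \<Rightarrow> real" and \<mu> :: "complex measure" and n x
  assume h1: "\<forall>n\<ge>1. 1/4 \<le> lam n \<and> lam n \<le> lambda" and h2: "sets \<mu> = sets borel"
    and h3: "prob_space \<mu>" and h4: "measure \<mu> (cantorK lam) = 1"
    and h5: "\<forall>n. \<forall>Q\<in>gen lam n. measure \<mu> Q = 1 / 4 ^ n" and x: "x \<in> cantorK lam"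
  interpret mhyp lam lambda \<mu>
    by (rule mhyp.intro[OF hyp.intro[OF h1 assms(2)] mhyp_axioms.intro[OF h2 h3 h4 h5]])
  show "norm (Sn lam \<mu> n x - Tn lam \<mu> n x) \<le> 2 / ((1 - 2 * lambda)^2 * (1 - 4 * lambda^2)) * a_seq lam n"
    using main_local[OF x, of n] unfolding Cc_def .
qed


end
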